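(* Let $X$ be a Polish space with compatible metric $d$, and let $(\mathcal M_n)_{n\in\mathbb{N}}$ be partitions of $X$, each consisting of at most countably many Borel sets, with $\lim_{n\to\infty}\|\mathcal M_n\|=0$. Let $\mu_n,\mu\in\mathcal P(X)$ satisfy $\mu_n(M)=\mu(M)$ for all $n$ and all $M\in\mathcal M_n$. Then $\mu_n\to\mu$ weakly. If moreover $p\in[1,\infty)$ and $\mu_n,\mu$ have finite $p$-th moments, then $\mu_n\to\mu$ in $\mathcal W_p$.
   Context: The mesh of a partition is $\|\mathcal M\|=\sup_{M\in\mathcal M}\mathrm{diam}(M)$. $\mathcal W_p^p(\alpha,\beta)=\inf_{\gamma\in\mathrm{Cpl}(\alpha,\beta)}\int d^p\,d\gamma$. *)

theory Defs
  imports "HOL-Probability.Probability"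
begin

definition Polish_space :: "'a topology \<Rightarrow> bool" where
  "Polish_space T \<longleftrightarrow> completely_metrizable_space T \<and> separable_space T"

definition ediam :: "'a::metric_space set \<Rightarrow> ereal" where
  "ediam S = (SUP z\<in>S \<times> S. ereal (dist (fst z) (snd z)))"

definition mesh :: "'a::metric_space set set \<Rightarrow> ereal" where
  "mesh P = (SUP S\<in>P. ediam S)"

definition countable_borel_partition :: "'a::topological_space set set \<Rightarrow> bool" where
  "countable_borel_partition P \<longleftrightarrow> countable P \<and> P \<subseteq> sets borel \<and>
     disjoint P \<and> \<Union>P = UNIV"

definition borel_prob :: "'a::topological_space measure \<Rightarrow> bool" where
  "borel_prob M \<longleftrightarrow> prob_space M \<and> sets M = sets borel"

definition weak_conv_seq :: "(nat \<Rightarrow> 'a::topological_space measure) \<Rightarrow> 'a measure \<Rightarrow> bool" where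
  "weak_conv_seq \<mu>s \<mu> \<longleftrightarrow>
     (\<forall>f :: 'a \<Rightarrow> real. continuous_on UNIV f \<and> bounded (range f) \<longrightarrow>
        (\<lambda>n. integral\<^sup>L (\<mu>s n) f) \<longlonglongrightarrow> integral\<^sup>L \<mu> f)"

definition finite_moment :: "real \<Rightarrow> 'a::metric_space measure \<Rightarrow> bool" where
  "finite_moment p M \<longleftrightarrow> (\<exists>x0. (\<integral>\<^sup>+ x. ennreal (dist x x0 powr p) \<partial>M) < \<infinity>)"

definition couplings :: "'a::topological_space measure \<Rightarrow> 'a measure \<Rightarrow> ('a \<times> 'a) measure set" where
  "couplings \<alpha> \<beta> = {\<gamma>. prob_space \<gamma> \<and> sets \<gamma> = sets (borel \<Otimes>\<^sub>M borel) \<and>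
      distr \<gamma> borel fst = \<alpha> \<and> distr \<gamma> borel snd = \<beta>}"

definition Wpp :: "real \<Rightarrow> 'a::metric_space measure \<Rightarrow> 'a measure \<Rightarrow> ennreal" where
  "Wpp p \<alpha> \<beta> = (INF \<gamma>\<in>couplings \<alpha> \<beta>. \<integral>\<^sup>+ z. ennreal (dist (fst z) (snd z) powr p) \<partial>\<gamma>)"

text \<open>The p-Wasserstein distance W_p = (W_p^p)^(1/p), for measures where W_p^p is finite.\<close>
definition Wasserstein :: "real \<Rightarrow> 'a::metric_space measure \<Rightarrow> 'a measure \<Rightarrow> real" where
  "Wasserstein p \<alpha> \<beta> = enn2real (Wpp p \<alpha> \<beta>) powr (1 / p)"

end

theory Submission
  imports Defs
begin

definition cell :: "'a set set \<Rightarrow> 'a \<Rightarrow> 'a set" where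
  "cell P x = (THE M. M \<in> P \<and> x \<in> M)"

lemma cell_ex1:
  assumes "countable_borel_partition P"
  shows "\<exists>!M. M \<in> P \<and> x \<in> M"
proof -
  have "x \<in> \<Union>P" using assms by (simp add: countable_borel_partition_def)
  then obtain M where "M \<in> P" "x \<in> M" by blast
  moreover have "M' = M" if "M' \<in> P" "x \<in> M'" for M'
    using assms \<open>M \<in> P\<close> \<open>x \<in> M\<close> that
    unfolding countable_borel_partition_def disjoint_def by blast
  ultimately show ?thesis by blast
qed

lemma cell:
  assumes "countable_borel_partition P"
  shows "cell P x \<in> P" "x \<in> cell P x"
  using theI'[OF cell_ex1[OF assms, of x]] unfolding cell_def by auto

lemma cell_eq:
  assumes "countable_borel_partition P" "M \<in> P" "x \<in> M"
  shows "cell P x = M"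
  using cell_ex1[OF assms(1), of x] cell[OF assms(1), of x] assms by blast

lemma cell_measurable:
  assumes P: "countable_borel_partition P" and h: "\<And>M. M \<in> P \<Longrightarrow> h M \<in> space N"
  shows "(\<lambda>x. h (cell P x)) \<in> measurable borel N"
proof (rule measurableI)
  fix x show "h (cell P x) \<in> space N" using h cell[OF P] by blast
next
  fix A assume "A \<in> sets N"
  have "(\<lambda>x. h (cell P x)) -` A \<inter> space borel = \<Union>{M\<in>P. h M \<in> A}"
    using cell[OF P] cell_eq[OF P] by auto
  moreover have "\<Union>{M\<in>P. h M \<in> A} \<in> sets borel"
    using P unfolding countable_borel_partition_def
    by (intro sets.countable_Union) (auto intro: countable_subset)
  ultimately show "(\<lambda>x. h (cell P x)) -` A \<inter> space borel \<in> sets borel" by simp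
qed


lemma coupling_exists:
  assumes P: "countable_borel_partition P" and a: "borel_prob \<alpha>" and b: "borel_prob \<beta>"
    and agree: "\<And>M. M \<in> P \<Longrightarrow> measure \<alpha> M = measure \<beta> M"
  shows "\<exists>\<gamma>\<in>couplings \<alpha> \<beta>. AE z in \<gamma>. \<exists>M\<in>P. fst z \<in> M \<and> snd z \<in> M"
proof -
  interpret A: prob_space \<alpha> using a by (simp add: borel_prob_def)
  interpret B: prob_space \<beta> using b by (simp add: borel_prob_def)
  interpret AB: pair_prob_space \<alpha> \<beta> by unfold_locales
  have sa: "sets \<alpha> = sets borel" and sb: "sets \<beta> = sets borel"
    using a b by (auto simp: borel_prob_def)
  have spa: "space \<alpha> = UNIV" and spb: "space \<beta> = UNIV"
    using sets_eq_imp_space_eq[OF sa] sets_eq_imp_space_eq[OF sb] by auto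
  have Psets: "M \<in> sets borel" if "M \<in> P" for M
    using P that by (auto simp: countable_borel_partition_def)
  have Pc: "countable P" using P by (simp add: countable_borel_partition_def)
  define c where "c = cell P"
  have cP: "c x \<in> P" and cx: "x \<in> c x" for x using cell[OF P] by (auto simp: c_def)
  have ceq: "c x = M" if "M \<in> P" "x \<in> M" for x M using cell_eq[OF P that] by (simp add: c_def)
  define E where "E = (\<Union>M\<in>P. M \<times> M)"
  have E_iff: "z \<in> E \<longleftrightarrow> c (fst z) = c (snd z)" for z
  proof -
    obtain x y where z: "z = (x, y)" by (cases z)
    have "(x, y) \<in> E \<longleftrightarrow> c x = c y"
    proof
      assume "(x, y) \<in> E"
      then obtain M where "M \<in> P" "x \<in> M" "y \<in> M" unfolding E_def by blast
      then show "c x = c y" using ceq by metis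
    next
      assume "c x = c y"
      then have "(x, y) \<in> c x \<times> c x" using cx by (metis SigmaI)
      then show "(x, y) \<in> E" unfolding E_def using cP by blast
    qed
    then show ?thesis using z by simp
  qed
  have E_iff2: "(x, y) \<in> E \<longleftrightarrow> y \<in> c x" for x y
    using E_iff[of "(x,y)"] cx ceq cP by auto
  have E_iff3: "(x, y) \<in> E \<longleftrightarrow> x \<in> c y" for x y
    using E_iff[of "(x,y)"] cx[of x] ceq[OF cP[of y], of x] by auto
  have Esets: "E \<in> sets (\<alpha> \<Otimes>\<^sub>M \<beta>)"
    unfolding E_def using Pc Psets sa sb
    by (intro sets.countable_UN'') (auto intro!: pair_measureI)
  define w where "w x = 1 / measure \<beta> (c x)" for x
  have wm: "w \<in> borel_measurable borel"
    unfolding w_def c_def by (rule cell_measurable[OF P]) simp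
  define g where "g z = ennreal (w (fst z)) * indicator E z" for z
  have gm: "g \<in> borel_measurable (\<alpha> \<Otimes>\<^sub>M \<beta>)"
  proof -
    have "w \<in> borel_measurable \<alpha>" using wm measurable_cong_sets[OF sa refl] by blast
    then have "(\<lambda>z. w (fst z)) \<in> borel_measurable (\<alpha> \<Otimes>\<^sub>M \<beta>)" by measurable
    then show ?thesis unfolding g_def using Esets by measurable
  qed
  define \<gamma> where "\<gamma> = density (\<alpha> \<Otimes>\<^sub>M \<beta>) g"
  have sg: "sets \<gamma> = sets (\<alpha> \<Otimes>\<^sub>M \<beta>)" by (simp add: \<gamma>_def)
  have spg: "space \<gamma> = UNIV" by (simp add: \<gamma>_def space_pair_measure spa spb)
  define Z where "Z = \<Union>{M\<in>P. measure \<beta> M = 0}"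
  have ZA: "Z \<in> null_sets \<alpha>"
  proof -
    have "Z = (\<Union>M\<in>{M\<in>P. measure \<beta> M = 0}. M)" by (simp add: Z_def)
    also have "\<dots> \<in> null_sets \<alpha>"
      using Pc Psets sa agree by (intro null_sets_UN') (auto intro: countable_subset simp: A.emeasure_eq_measure)
    finally show ?thesis .
  qed
  have ZB: "Z \<in> null_sets \<beta>"
  proof -
    have "Z = (\<Union>M\<in>{M\<in>P. measure \<beta> M = 0}. M)" by (simp add: Z_def)
    also have "\<dots> \<in> null_sets \<beta>"
      using Pc Psets sb by (intro null_sets_UN') (auto intro: countable_subset simp: B.emeasure_eq_measure)
    finally show ?thesis .
  qed
  have Z_iff: "x \<in> Z \<longleftrightarrow> measure \<beta> (c x) = 0" for x
    unfolding Z_def using cP cx ceq by blast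
  have wmeas: "ennreal (w x) * ennreal (measure \<beta> (c x)) = indicator (- Z) x" for x
    using Z_iff[of x] by (auto simp: w_def indicator_def ennreal_mult[symmetric])
  have marg1: "emeasure \<gamma> (A \<times> UNIV) = emeasure \<alpha> A" if A: "A \<in> sets borel" for A
  proof -
    have AU: "A \<times> UNIV \<in> sets (\<alpha> \<Otimes>\<^sub>M \<beta>)" using A sa sb spb by (metis pair_measureI sets.top)
    have "emeasure \<gamma> (A \<times> UNIV) = (\<integral>\<^sup>+ z. g z * indicator (A \<times> UNIV) z \<partial>(\<alpha> \<Otimes>\<^sub>M \<beta>))"
      unfolding \<gamma>_def using AU gm by (simp add: emeasure_density)
    also have "\<dots> = (\<integral>\<^sup>+ x. \<integral>\<^sup>+ y. g (x, y) * indicator (A \<times> UNIV) (x, y) \<partial>\<beta> \<partial>\<alpha>)"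
      using AU gm by (intro B.nn_integral_fst[symmetric] borel_measurable_times_ennreal borel_measurable_indicator)
    also have "\<dots> = (\<integral>\<^sup>+ x. indicator (A - Z) x \<partial>\<alpha>)"
    proof (rule nn_integral_cong)
      fix x
      have "(\<integral>\<^sup>+ y. g (x, y) * indicator (A \<times> UNIV) (x, y) \<partial>\<beta>)
          = (\<integral>\<^sup>+ y. (ennreal (w x) * indicator A x) * indicator (c x) y \<partial>\<beta>)"
        by (intro nn_integral_cong) (auto simp: g_def indicator_def E_iff2)
      also have "\<dots> = ennreal (w x) * indicator A x * emeasure \<beta> (c x)"
        using cP Psets sb by (intro nn_integral_cmult_indicator) auto
      also have "\<dots> = indicator A x * (ennreal (w x) * ennreal (measure \<beta> (c x)))"
        by (simp add: B.emeasure_eq_measure mult_ac)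
      also have "\<dots> = indicator (A - Z) x" by (simp add: wmeas indicator_def)
      finally show "(\<integral>\<^sup>+ y. g (x, y) * indicator (A \<times> UNIV) (x, y) \<partial>\<beta>) = indicator (A - Z) x" .
    qed
    also have "\<dots> = emeasure \<alpha> (A - Z)"
      using A ZA sa by (intro nn_integral_indicator) auto
    also have "\<dots> = emeasure \<alpha> A"
      using A ZA sa by (intro emeasure_Diff_null_set) auto
    finally show ?thesis .
  qed
  have marg2: "emeasure \<gamma> (UNIV \<times> A) = emeasure \<beta> A" if A: "A \<in> sets borel" for A
  proof -
    have AU: "UNIV \<times> A \<in> sets (\<alpha> \<Otimes>\<^sub>M \<beta>)" using A sa sb spa by (metis pair_measureI sets.top)
    have "emeasure \<gamma> (UNIV \<times> A) = (\<integral>\<^sup>+ z. g z * indicator (UNIV \<times> A) z \<partial>(\<alpha> \<Otimes>\<^sub>M \<beta>))"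
      unfolding \<gamma>_def using AU gm by (simp add: emeasure_density)
    also have "\<dots> = (\<integral>\<^sup>+ y. \<integral>\<^sup>+ x. g (x, y) * indicator (UNIV \<times> A) (x, y) \<partial>\<alpha> \<partial>\<beta>)"
      using AU gm by (intro AB.nn_integral_snd[symmetric] borel_measurable_times_ennreal borel_measurable_indicator)
    also have "\<dots> = (\<integral>\<^sup>+ y. indicator (A - Z) y \<partial>\<beta>)"
    proof (rule nn_integral_cong)
      fix y
      have "(\<integral>\<^sup>+ x. g (x, y) * indicator (UNIV \<times> A) (x, y) \<partial>\<alpha>)
          = (\<integral>\<^sup>+ x. (ennreal (w y) * indicator A y) * indicator (c y) x \<partial>\<alpha>)"
      proof (intro nn_integral_cong)
        fix x
        show "g (x, y) * indicator (UNIV \<times> A) (x, y) = (ennreal (w y) * indicator A y) * indicator (c y) x"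
        proof (cases "x \<in> c y")
          case True
          then have "c x = c y" using ceq cP by blast
          then show ?thesis using True by (simp add: g_def indicator_def E_iff3 w_def)
        qed (simp add: g_def indicator_def E_iff3)
      qed
      also have "\<dots> = ennreal (w y) * indicator A y * emeasure \<alpha> (c y)"
        using cP Psets sa by (intro nn_integral_cmult_indicator) auto
      also have "\<dots> = indicator A y * (ennreal (w y) * ennreal (measure \<beta> (c y)))"
        by (simp add: A.emeasure_eq_measure agree[OF cP] mult_ac)
      also have "\<dots> = indicator (A - Z) y" by (simp add: wmeas indicator_def)
      finally show "(\<integral>\<^sup>+ x. g (x, y) * indicator (UNIV \<times> A) (x, y) \<partial>\<alpha>) = indicator (A - Z) y" .
    qed
    also have "\<dots> = emeasure \<beta> (A - Z)"
      using A ZB sb by (intro nn_integral_indicator) auto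
    also have "\<dots> = emeasure \<beta> A"
      using A ZB sb by (intro emeasure_Diff_null_set) auto
    finally show ?thesis .
  qed
  have sg2: "sets \<gamma> = sets (borel \<Otimes>\<^sub>M borel)"
    using sg sa sb by (metis sets_pair_measure_cong)
  have fstm: "fst \<in> measurable \<gamma> borel" and sndm: "snd \<in> measurable \<gamma> borel"
    using measurable_cong_sets[OF sg2 refl] by auto
  have d1: "distr \<gamma> borel fst = \<alpha>"
  proof (rule measure_eqI)
    show "sets (distr \<gamma> borel fst) = sets \<alpha>" using sa by simp
    fix A assume "A \<in> sets (distr \<gamma> borel fst)"
    then have A: "A \<in> sets borel" by simp
    have "fst -` A \<inter> space \<gamma> = A \<times> UNIV" by (auto simp: spg)
    then show "emeasure (distr \<gamma> borel fst) A = emeasure \<alpha> A"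
      using A fstm marg1 by (simp add: emeasure_distr)
  qed
  have d2: "distr \<gamma> borel snd = \<beta>"
  proof (rule measure_eqI)
    show "sets (distr \<gamma> borel snd) = sets \<beta>" using sb by simp
    fix A assume "A \<in> sets (distr \<gamma> borel snd)"
    then have A: "A \<in> sets borel" by simp
    have "snd -` A \<inter> space \<gamma> = UNIV \<times> A" by (auto simp: spg)
    then show "emeasure (distr \<gamma> borel snd) A = emeasure \<beta> A"
      using A sndm marg2 by (simp add: emeasure_distr)
  qed
  have pg: "prob_space \<gamma>"
  proof (rule prob_spaceI)
    have "emeasure \<gamma> (space \<gamma>) = emeasure \<gamma> (UNIV \<times> UNIV)" by (simp add: spg)
    also have "\<dots> = emeasure \<alpha> UNIV" by (rule marg1) simp
    also have "\<dots> = 1" using A.emeasure_space_1 spa by simp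
    finally show "emeasure \<gamma> (space \<gamma>) = 1" .
  qed
  have ae: "AE z in \<gamma>. \<exists>M\<in>P. fst z \<in> M \<and> snd z \<in> M"
  proof -
    have spab: "space (\<alpha> \<Otimes>\<^sub>M \<beta>) = UNIV" by (simp add: space_pair_measure spa spb)
    have cE: "- E \<in> sets (\<alpha> \<Otimes>\<^sub>M \<beta>)"
      using sets.compl_sets[OF Esets] spab by (metis Compl_eq_Diff_UNIV)
    have "emeasure \<gamma> (- E) = (\<integral>\<^sup>+ z. g z * indicator (- E) z \<partial>(\<alpha> \<Otimes>\<^sub>M \<beta>))"
      unfolding \<gamma>_def using gm cE by (rule emeasure_density)
    also have "\<dots> = (\<integral>\<^sup>+ z. 0 \<partial>(\<alpha> \<Otimes>\<^sub>M \<beta>))"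
      by (intro nn_integral_cong) (simp add: g_def indicator_def)
    finally have e0: "emeasure \<gamma> (- E) = 0" by simp
    have cEg: "- E \<in> sets \<gamma>" using cE sg by simp
    have nul: "- E \<in> null_sets \<gamma>" using e0 cEg by (rule null_setsI)
    have sub: "{z \<in> space \<gamma>. \<not> (\<exists>M\<in>P. fst z \<in> M \<and> snd z \<in> M)} \<subseteq> - E"
    proof
      fix z assume z: "z \<in> {z \<in> space \<gamma>. \<not> (\<exists>M\<in>P. fst z \<in> M \<and> snd z \<in> M)}"
      show "z \<in> - E"
      proof
        assume "z \<in> E"
        then have "c (fst z) = c (snd z)" using E_iff by blast
        then have "fst z \<in> c (fst z) \<and> snd z \<in> c (fst z)" using cx by metis
        then show False using z cP by blast
      qed
    qed
    show ?thesis by (rule AE_I'[OF nul sub])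
  qed
  have "\<gamma> \<in> couplings \<alpha> \<beta>" using pg sg2 d1 d2 by (simp add: couplings_def)
  with ae show ?thesis by blast
qed


lemma coupling_integral_bound:
  fixes f h :: "'a::topological_space \<Rightarrow> real"
  assumes g: "\<gamma> \<in> couplings \<alpha> \<beta>"
    and ae: "AE z in \<gamma>. \<bar>f (fst z) - f (snd z)\<bar> \<le> h (snd z)"
    and fm: "f \<in> borel_measurable borel" and hm: "h \<in> borel_measurable borel"
    and fB: "\<And>x. \<bar>f x\<bar> \<le> B" and hC: "\<And>x. \<bar>h x\<bar> \<le> C"
  shows "\<bar>integral\<^sup>L \<alpha> f - integral\<^sup>L \<beta> f\<bar> \<le> integral\<^sup>L \<beta> h"
proof -
  have pg: "prob_space \<gamma>" and sg: "sets \<gamma> = sets (borel \<Otimes>\<^sub>M borel)"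
    and d1: "distr \<gamma> borel fst = \<alpha>" and d2: "distr \<gamma> borel snd = \<beta>"
    using g by (auto simp: couplings_def)
  interpret G: prob_space \<gamma> by (rule pg)
  have fstm: "fst \<in> measurable \<gamma> borel" and sndm: "snd \<in> measurable \<gamma> borel"
    using measurable_cong_sets[OF sg refl] by auto
  have i1: "integral\<^sup>L \<alpha> f = (\<integral>z. f (fst z) \<partial>\<gamma>)"
    using integral_distr[OF fstm fm] d1 by simp
  have i2: "integral\<^sup>L \<beta> f = (\<integral>z. f (snd z) \<partial>\<gamma>)"
    using integral_distr[OF sndm fm] d2 by simp
  have i3: "integral\<^sup>L \<beta> h = (\<integral>z. h (snd z) \<partial>\<gamma>)"
    using integral_distr[OF sndm hm] d2 by simp
  have m1: "(\<lambda>z. f (fst z)) \<in> borel_measurable \<gamma>" using measurable_compose[OF fstm fm] by simp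
  have m2: "(\<lambda>z. f (snd z)) \<in> borel_measurable \<gamma>" using measurable_compose[OF sndm fm] by simp
  have m3: "(\<lambda>z. h (snd z)) \<in> borel_measurable \<gamma>" using measurable_compose[OF sndm hm] by simp
  have int1: "integrable \<gamma> (\<lambda>z. f (fst z))"
    using fB m1 by (intro G.integrable_const_bound[where B=B]) auto
  have int2: "integrable \<gamma> (\<lambda>z. f (snd z))"
    using fB m2 by (intro G.integrable_const_bound[where B=B]) auto
  have int3: "integrable \<gamma> (\<lambda>z. h (snd z))"
    using hC m3 by (intro G.integrable_const_bound[where B=C]) auto
  have "\<bar>integral\<^sup>L \<alpha> f - integral\<^sup>L \<beta> f\<bar> = \<bar>\<integral>z. f (fst z) - f (snd z) \<partial>\<gamma>\<bar>"
    using i1 i2 int1 int2 by simp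
  also have "\<dots> \<le> (\<integral>z. \<bar>f (fst z) - f (snd z)\<bar> \<partial>\<gamma>)"
    by (rule integral_abs_bound)
  also have "\<dots> \<le> (\<integral>z. h (snd z) \<partial>\<gamma>)"
    using ae int1 int2 int3 by (intro integral_mono_AE) auto
  finally show ?thesis using i3 by simp
qed

lemma dist_le_mesh:
  assumes "M \<in> P" "a \<in> M" "b \<in> M"
  shows "ereal (dist a b) \<le> mesh P"
proof -
  have "ereal (dist a b) \<le> ediam M"
    unfolding ediam_def using assms
    by (intro SUP_upper2[where i="(a,b)"]) auto
  also have "ediam M \<le> mesh P" unfolding mesh_def using assms(1) by (rule SUP_upper)
  finally show ?thesis .
qed


theorem lemma2p4:
  fixes \<M> :: "nat \<Rightarrow> 'a::metric_space set set"
    and \<mu>s :: "nat \<Rightarrow> 'a measure" and \<mu> :: "'a measure"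
  assumes polish: "Polish_space (euclidean :: 'a topology)"
    and part: "\<And>n. countable_borel_partition (\<M> n)"
    and mesh_lim: "(\<lambda>n. mesh (\<M> n)) \<longlonglongrightarrow> 0"
    and prob_n: "\<And>n. borel_prob (\<mu>s n)"
    and prob: "borel_prob \<mu>"
    and agree: "\<And>n M. M \<in> \<M> n \<Longrightarrow> measure (\<mu>s n) M = measure \<mu> M"
  shows "weak_conv_seq \<mu>s \<mu> \<and>
    (\<forall>p::real. 1 \<le> p \<and> (\<forall>n. finite_moment p (\<mu>s n)) \<and> finite_moment p \<mu> \<longrightarrow>
       (\<lambda>n. Wasserstein p (\<mu>s n) \<mu>) \<longlonglongrightarrow> 0)"
proof -
  define Q where "Q n \<gamma> \<longleftrightarrow> \<gamma> \<in> couplings (\<mu>s n) \<mu> \<and> (AE z in \<gamma>. \<exists>M\<in>\<M> n. fst z \<in> M \<and> snd z \<in> M)" for n \<gamma>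
  define \<Gamma> where "\<Gamma> n = (SOME \<gamma>. Q n \<gamma>)" for n
  have "Q n (\<Gamma> n)" for n
    unfolding \<Gamma>_def using coupling_exists[OF part prob_n prob agree, of n] Q_def
    by (metis (no_types, lifting) someI_ex)
  then have \<Gamma>c: "\<Gamma> n \<in> couplings (\<mu>s n) \<mu>"
    and \<Gamma>ae: "AE z in \<Gamma> n. \<exists>M\<in>\<M> n. fst z \<in> M \<and> snd z \<in> M" for n
    by (auto simp: Q_def)
  have \<Gamma>p: "prob_space (\<Gamma> n)" for n using \<Gamma>c by (simp add: couplings_def)
  have ev: "eventually (\<lambda>n. mesh (\<M> n) < ereal d) sequentially" if "d > 0" for d
    using order_tendstoD(2)[OF mesh_lim, of "ereal d"] that by simp
  have close: "AE z in \<Gamma> n. dist (fst z) (snd z) < d" if "mesh (\<M> n) < ereal d" for n d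
    using \<Gamma>ae[of n]
  proof eventually_elim
    case (elim z)
    then obtain M where "M \<in> \<M> n" "fst z \<in> M" "snd z \<in> M" by blast
    then have "ereal (dist (fst z) (snd z)) \<le> mesh (\<M> n)" by (rule dist_le_mesh)
    then have "ereal (dist (fst z) (snd z)) < ereal d" using that by (rule order.strict_trans1)
    then show ?case by simp
  qed
  have W: "(\<lambda>n. Wasserstein p (\<mu>s n) \<mu>) \<longlonglongrightarrow> 0" if p: "1 \<le> p" for p
  proof (rule LIMSEQ_I)
    fix r :: real assume r: "0 < r"
    obtain N where N: "\<And>n. n \<ge> N \<Longrightarrow> mesh (\<M> n) < ereal (r/2)"
      using ev[of "r/2"] r by (auto simp: eventually_sequentially)
    have "norm (Wasserstein p (\<mu>s n) \<mu> - 0) < r" if n: "n \<ge> N" for n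
    proof -
      interpret G: prob_space "\<Gamma> n" by (rule \<Gamma>p)
      have "Wpp p (\<mu>s n) \<mu> \<le> (\<integral>\<^sup>+ z. ennreal (dist (fst z) (snd z) powr p) \<partial>\<Gamma> n)"
        unfolding Wpp_def using \<Gamma>c by (rule INF_lower)
      also have "\<dots> \<le> (\<integral>\<^sup>+ z. ennreal ((r/2) powr p) \<partial>\<Gamma> n)"
        using close[OF N[OF n]]
      proof (intro nn_integral_mono_AE, eventually_elim)
        case (elim z)
        then show ?case using p by (intro ennreal_leI powr_mono2) auto
      qed
      also have "\<dots> = ennreal ((r/2) powr p)"
        by (simp add: G.emeasure_space_1)
      finally have le: "Wpp p (\<mu>s n) \<mu> \<le> ennreal ((r/2) powr p)" .
      have "enn2real (Wpp p (\<mu>s n) \<mu>) \<le> enn2real (ennreal ((r/2) powr p))"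
        using le by (intro enn2real_mono) auto
      then have le2: "enn2real (Wpp p (\<mu>s n) \<mu>) \<le> (r/2) powr p" by simp
      have "Wasserstein p (\<mu>s n) \<mu> \<le> ((r/2) powr p) powr (1/p)"
        unfolding Wasserstein_def using le2 p by (intro powr_mono2) auto
      also have "\<dots> = r/2" using p r by (simp add: powr_powr)
      finally have "Wasserstein p (\<mu>s n) \<mu> \<le> r/2" .
      moreover have "0 \<le> Wasserstein p (\<mu>s n) \<mu>" by (simp add: Wasserstein_def)
      ultimately show ?thesis using r by simp
    qed
    then show "\<exists>no. \<forall>n\<ge>no. norm (Wasserstein p (\<mu>s n) \<mu> - 0) < r" by blast
  qed
  have weak: "weak_conv_seq \<mu>s \<mu>"
    unfolding weak_conv_seq_def
  proof (intro allI impI)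
    fix f :: "'a \<Rightarrow> real"
    assume fa: "continuous_on UNIV f \<and> bounded (range f)"
    then have fc: "continuous_on UNIV f" and fb: "bounded (range f)" by auto
    obtain B where B0: "\<forall>x\<in>range f. norm x \<le> B"
      using fb unfolding bounded_iff by blast
    have B: "\<bar>f x\<bar> \<le> B" for x using B0 by simp
    have fm: "f \<in> borel_measurable borel" using fc by (rule borel_measurable_continuous_onI)
    define osc where "osc M = (SUP z\<in>M \<times> M. \<bar>f (fst z) - f (snd z)\<bar>)" for M
    have bdd: "bdd_above ((\<lambda>z. \<bar>f (fst z) - f (snd z)\<bar>) ` S)" for S
    proof (rule bdd_aboveI2)
      fix z show "\<bar>f (fst z) - f (snd z)\<bar> \<le> 2 * B" using B[of "fst z"] B[of "snd z"] by linarith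
    qed
    have osc_upper: "\<bar>f a - f b\<bar> \<le> osc M" if "a \<in> M" "b \<in> M" for a b M
      unfolding osc_def using that bdd
      by (intro cSUP_upper2[where x="(a,b)"]) auto
    have osc_least: "osc M \<le> c" if "a \<in> M" "\<And>a b. a \<in> M \<Longrightarrow> b \<in> M \<Longrightarrow> \<bar>f a - f b\<bar> \<le> c" for a M c
      unfolding osc_def using that by (intro cSUP_least) auto
    define h where "h n y = osc (cell (\<M> n) y)" for n y
    have h_nn: "0 \<le> h n y" for n y
    proof -
      have "\<bar>f y - f y\<bar> \<le> osc (cell (\<M> n) y)" by (rule osc_upper[OF cell(2)[OF part] cell(2)[OF part]])
      then show ?thesis by (simp add: h_def)
    qed
    have h_le: "h n y \<le> 2 * B" for n y
      unfolding h_def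
    proof (rule osc_least[OF cell(2)[OF part]])
      fix a b show "\<bar>f a - f b\<bar> \<le> 2 * B" using B[of a] B[of b] by linarith
    qed
    have h_abs: "\<bar>h n y\<bar> \<le> 2 * B" for n y using h_nn[of n y] h_le[of n y] by simp
    have hm: "h n \<in> borel_measurable borel" for n
      unfolding h_def[abs_def] by (rule cell_measurable[OF part]) simp
    have sm: "sets \<mu> = sets borel" using prob by (simp add: borel_prob_def)
    interpret P: prob_space \<mu> using prob by (simp add: borel_prob_def)
    have hm': "h n \<in> borel_measurable \<mu>" for n using hm measurable_cong_sets[OF sm refl] by blast
    have hlim: "(\<lambda>n. h n y) \<longlonglongrightarrow> 0" for y
    proof (rule LIMSEQ_I)
      fix r :: real assume r: "0 < r"
      have "isCont f y" using fc by (simp add: continuous_on_eq_continuous_at)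
      then have ed: "\<forall>e>0. \<exists>d>0. \<forall>x'. dist x' y < d \<longrightarrow> dist (f x') (f y) < e"
        by (simp add: continuous_at_eps_delta)
      have r3: "0 < r/3" using r by simp
      obtain d where d: "d > 0" "\<And>x'. dist x' y < d \<Longrightarrow> dist (f x') (f y) < r/3"
        using ed[rule_format, OF r3] by blast
      obtain N where N: "\<And>n. n \<ge> N \<Longrightarrow> mesh (\<M> n) < ereal d"
        using ev[OF d(1)] by (auto simp: eventually_sequentially)
      have "norm (h n y - 0) < r" if n: "n \<ge> N" for n
      proof -
        let ?M = "cell (\<M> n) y"
        have near: "\<bar>f a - f y\<bar> < r/3" if a: "a \<in> ?M" for a
        proof -
          have "ereal (dist a y) \<le> mesh (\<M> n)"
            using dist_le_mesh[OF cell(1)[OF part] a cell(2)[OF part]] .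
          then have "ereal (dist a y) < ereal d" using N[OF n] by (rule order.strict_trans1)
          then have "dist a y < d" by simp
          then show ?thesis using d(2) by (simp add: dist_real_def)
        qed
        have "h n y \<le> 2 * r / 3"
          unfolding h_def
        proof (rule osc_least[OF cell(2)[OF part]])
          fix a b assume "a \<in> ?M" "b \<in> ?M"
          then show "\<bar>f a - f b\<bar> \<le> 2 * r / 3" using near[of a] near[of b] by linarith
        qed
        then show ?thesis using h_nn[of n y] r by simp
      qed
      then show "\<exists>no. \<forall>n\<ge>no. norm (h n y - 0) < r" by blast
    qed
    have hint: "(\<lambda>n. integral\<^sup>L \<mu> (h n)) \<longlonglongrightarrow> integral\<^sup>L \<mu> (\<lambda>_. 0::real)"
    proof (rule integral_dominated_convergence[where w="\<lambda>_. 2 * B"])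
      show "(\<lambda>_. 0::real) \<in> borel_measurable \<mu>" by simp
      show "\<And>n. h n \<in> borel_measurable \<mu>" by (rule hm')
      show "integrable \<mu> (\<lambda>_. 2 * B)" by simp
      show "AE y in \<mu>. (\<lambda>n. h n y) \<longlonglongrightarrow> 0" using hlim by simp
      show "\<And>n. AE y in \<mu>. norm (h n y) \<le> 2 * B" using h_abs by simp
    qed
    then have hint0: "(\<lambda>n. integral\<^sup>L \<mu> (h n)) \<longlonglongrightarrow> 0" by simp
    have bnd: "norm (integral\<^sup>L (\<mu>s n) f - integral\<^sup>L \<mu> f) \<le> integral\<^sup>L \<mu> (h n)" for n
    proof -
      have ae: "AE z in \<Gamma> n. \<bar>f (fst z) - f (snd z)\<bar> \<le> h n (snd z)"
        using \<Gamma>ae[of n]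
      proof eventually_elim
        case (elim z)
        then obtain M where M: "M \<in> \<M> n" "fst z \<in> M" "snd z \<in> M" by blast
        then have "cell (\<M> n) (snd z) = M" by (intro cell_eq[OF part])
        then show ?case unfolding h_def using osc_upper[OF M(2,3)] by simp
      qed
      show ?thesis using coupling_integral_bound[OF \<Gamma>c ae fm hm B h_abs] by simp
    qed
    have all: "\<forall>n. norm (integral\<^sup>L (\<mu>s n) f - integral\<^sup>L \<mu> f) \<le> integral\<^sup>L \<mu> (h n)"
      using bnd by blast
    have "(\<lambda>n. integral\<^sup>L (\<mu>s n) f - integral\<^sup>L \<mu> f) \<longlonglongrightarrow> 0"
      by (rule Lim_null_comparison[OF always_eventually[OF all] hint0])
    then show "(\<lambda>n. integral\<^sup>L (\<mu>s n) f) \<longlonglongrightarrow> integral\<^sup>L \<mu> f"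
      by (rule LIM_zero_cancel)
  qed
  show ?thesis using weak W by blast
qed

end
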